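(* Let $A$ be a finite arrangement of hyperplanes in general position in $\mathbb{R}^d$ (in particular, at most $d$ hyperplanes of $A$ pass through any point), let $m\le d+1$, and let $\ell_1,\dots,\ell_m$ be directions in $\mathbb{R}^d$ any $d$ of which are linearly independent. If $k\le\left\lceil\frac{|A|-d}{d+1}\right\rceil$, then $\bigcap_{i=1}^m R_A(k,\ell_i)\neq\emptyset$.
   Context: For a finite hyperplane arrangement $A$ in $\mathbb{R}^d$, a direction (nonzero vector) $\ell$ and a point $q$, let $\ell(q)$ be the number of hyperplanes of $A$ intersected by the open ray $\{q+t\ell: t>0\}$ (the ray does not contain $q$). For an integer $k$, $R_A(k,\ell):=\{q\in\mathbb{R}^d:\ell(q)\ge k\}$. *)

theory Defs
  imports "HOL-Analysis.Analysis"
begin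

definition is_hyperplane :: "'a::euclidean_space set \<Rightarrow> bool" where
  "is_hyperplane H \<longleftrightarrow> (\<exists>a b. a \<noteq> 0 \<and> H = {x. a \<bullet> x = b})"

definition general_position :: "'a::euclidean_space set set \<Rightarrow> bool" where
  "general_position A \<longleftrightarrow>
     (\<forall>S\<subseteq>A. S \<noteq> {} \<and> card S \<le> DIM('a) \<longrightarrow> aff_dim (\<Inter>S) = int DIM('a) - int (card S)) \<and>
     (\<forall>S\<subseteq>A. card S = DIM('a) + 1 \<longrightarrow> \<Inter>S = {})"

definition ray_count :: "'a::euclidean_space set set \<Rightarrow> 'a \<Rightarrow> 'a \<Rightarrow> nat" where
  "ray_count A l q = card {H \<in> A. \<exists>t::real. t > 0 \<and> q + t *\<^sub>R l \<in> H}"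

definition R_A :: "'a::euclidean_space set set \<Rightarrow> int \<Rightarrow> 'a \<Rightarrow> 'a set" where
  "R_A A k l = {q. int (ray_count A l q) \<ge> k}"

end

theory Submission imports Defs begin

definition stdsimp :: "'b::euclidean_space set" where
  "stdsimp = {x. (\<forall>j\<in>Basis. 0 \<le> x \<bullet> j) \<and> (\<Sum>j\<in>Basis. x \<bullet> j) = 1}"

lemma stdsimp_coord_le1: "x \<in> stdsimp \<Longrightarrow> j \<in> Basis \<Longrightarrow> x \<bullet> j \<le> 1"
  unfolding stdsimp_def
  using member_le_sum[of j Basis "\<lambda>j. x \<bullet> j"] by auto

lemma stdsimp_compact: "compact (stdsimp :: 'b::euclidean_space set)"
proof -
  have cl: "closed (stdsimp :: 'b set)"
  proof -
    have eq: "{x::'b. (\<forall>j\<in>Basis. 0 \<le> x \<bullet> j) \<and> (\<Sum>j\<in>Basis. x \<bullet> j) = 1}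
       = (\<Inter>j\<in>Basis. {x. 0 \<le> x \<bullet> j}) \<inter> {x. (\<Sum>j\<in>Basis. x \<bullet> j) = 1}" by auto
    have c1: "closed (\<Inter>j\<in>Basis. {x::'b. 0 \<le> x \<bullet> j})"
      by (intro closed_INT ballI closed_Collect_le continuous_on_const continuous_on_inner continuous_on_id)
    have c2: "closed {x::'b. (\<Sum>j\<in>Basis. x \<bullet> j) = 1}"
      by (intro closed_Collect_eq continuous_on_sum continuous_on_const continuous_on_inner continuous_on_id)
    show ?thesis unfolding stdsimp_def eq using closed_Int[OF c1 c2] .
  qed
  have "(stdsimp :: 'b set) \<subseteq> cbox 0 One"
  proof
    fix x :: 'b assume x: "x \<in> stdsimp"
    have "\<forall>j\<in>Basis. x \<bullet> j \<le> 1" using stdsimp_coord_le1[OF x] by blast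
    moreover have "\<forall>j\<in>Basis. 0 \<le> x \<bullet> j" using x unfolding stdsimp_def by blast
    ultimately show "x \<in> cbox 0 One" by (simp add: mem_box)
  qed
  then have bd: "bounded (stdsimp :: 'b set)" by (rule bounded_subset[OF bounded_cbox])
  show ?thesis using bd cl compact_eq_bounded_closed by blast
qed

lemma stdsimp_convex: "convex (stdsimp :: 'b::euclidean_space set)"
  unfolding convex_def stdsimp_def
proof (intro ballI allI impI, clarify)
  fix x y :: 'b and u v :: real
  assume h: "\<forall>j\<in>Basis. 0 \<le> x \<bullet> j" "(\<Sum>j\<in>Basis. x \<bullet> j) = 1"
     "\<forall>j\<in>Basis. 0 \<le> y \<bullet> j" "(\<Sum>j\<in>Basis. y \<bullet> j) = 1" "0 \<le> u" "0 \<le> v" "u + v = 1"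
  show "(\<forall>j\<in>Basis. 0 \<le> (u *\<^sub>R x + v *\<^sub>R y) \<bullet> j) \<and> (\<Sum>j\<in>Basis. (u *\<^sub>R x + v *\<^sub>R y) \<bullet> j) = 1"
  proof
    show "\<forall>j\<in>Basis. 0 \<le> (u *\<^sub>R x + v *\<^sub>R y) \<bullet> j"
    proof
      fix j :: 'b assume j: "j \<in> Basis"
      have "0 \<le> u * (x \<bullet> j)" using h(1,5) j by simp
      moreover have "0 \<le> v * (y \<bullet> j)" using h(3,6) j by simp
      ultimately show "0 \<le> (u *\<^sub>R x + v *\<^sub>R y) \<bullet> j" by (simp add: inner_add_left)
    qed
    have "(\<Sum>j\<in>Basis. (u *\<^sub>R x + v *\<^sub>R y) \<bullet> j) = u * (\<Sum>j\<in>Basis. x \<bullet> j) + v * (\<Sum>j\<in>Basis. y \<bullet> j)"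
      by (simp only: inner_add_left inner_scaleR_left sum.distrib sum_distrib_left)
    then show "(\<Sum>j\<in>Basis. (u *\<^sub>R x + v *\<^sub>R y) \<bullet> j) = 1" using h(2,4,7) by simp
  qed
qed

lemma stdsimp_Basis:
  assumes j: "j \<in> Basis" shows "j \<in> stdsimp"
proof -
  have "(\<Sum>i\<in>Basis. j \<bullet> i) = (\<Sum>i\<in>Basis. if j = i then 1 else 0)"
    by (rule sum.cong) (auto simp: inner_Basis j)
  also have "\<dots> = 1" using j by simp
  finally show ?thesis unfolding stdsimp_def using j by (auto simp: inner_Basis)
qed

lemma kkm:
  fixes C :: "'b::euclidean_space \<Rightarrow> 'b set"
  assumes cl: "\<forall>j\<in>Basis. closed (C j)"
    and face: "\<forall>x\<in>stdsimp. \<exists>j\<in>Basis. 0 < x \<bullet> j \<and> x \<in> C j"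
  shows "\<exists>x\<in>stdsimp. \<forall>j\<in>Basis. x \<in> C j"
proof (rule ccontr)
  assume "\<not> ?thesis"
  then have nin: "\<forall>x\<in>stdsimp. \<exists>j\<in>Basis. x \<notin> C j" by blast
  have ne: "C j \<noteq> {}" if j: "j \<in> Basis" for j
  proof -
    have "\<exists>j'\<in>Basis. 0 < j \<bullet> j' \<and> j \<in> C j'" using face stdsimp_Basis[OF j] by (rule bspec)
    then obtain j' where j': "j' \<in> Basis" "0 < j \<bullet> j'" "j \<in> C j'" by blast
    have "j' = j"
    proof (rule ccontr)
      assume "j' \<noteq> j"
      then have "j \<bullet> j' = 0" using inner_Basis[OF j j'(1)] by simp
      with j'(2) show False by simp
    qed
    with \<open>j \<in> C j'\<close> show ?thesis by auto
  qed
  define D where "D x = (\<Sum>j\<in>Basis. infdist x (C j))" for x :: 'b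
  have Dpos: "0 < D x" if "x \<in> stdsimp" for x
  proof -
    have "\<exists>j\<in>Basis. x \<notin> C j" using nin that by (rule bspec)
    then obtain j where j: "j \<in> Basis" "x \<notin> C j" by (elim bexE)
    have "closed (C j)" using cl j(1) by blast
    then have "x \<in> C j \<longleftrightarrow> infdist x (C j) = 0"
      by (rule in_closed_iff_infdist_zero[OF _ ne[OF j(1)]])
    then have "infdist x (C j) \<noteq> 0" using j(2) by simp
    then have "0 < infdist x (C j)" using infdist_nonneg[of x "C j"] by linarith
    moreover have "infdist x (C j) \<le> D x"
      unfolding D_def by (rule member_le_sum[OF j(1)]) (simp_all add: infdist_nonneg)
    ultimately show ?thesis by linarith
  qed
  define f where "f x = (\<Sum>j\<in>Basis. (infdist x (C j) / D x) *\<^sub>R j)" for x :: 'b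
  have fcoord: "f x \<bullet> i = infdist x (C i) / D x" if i: "i \<in> Basis" for x i
  proof -
    have "f x \<bullet> i = (\<Sum>j\<in>Basis. (infdist x (C j) / D x) * (j \<bullet> i))"
      unfolding f_def by (simp only: inner_sum_left inner_scaleR_left)
    also have "\<dots> = (\<Sum>j\<in>Basis. if j = i then infdist x (C j) / D x else 0)"
      by (intro sum.cong refl) (simp add: inner_Basis i)
    also have "\<dots> = infdist x (C i) / D x" using i by simp
    finally show ?thesis .
  qed
  have c1: "continuous_on stdsimp (\<lambda>x. infdist x (C j))" for j
    by (intro continuous_on_infdist continuous_on_id)
  have cD: "continuous_on stdsimp D" unfolding D_def by (intro continuous_on_sum c1)
  have Dne: "\<forall>x\<in>stdsimp. D x \<noteq> 0" using Dpos by force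
  have cont: "continuous_on stdsimp f"
    unfolding f_def
    by (intro continuous_on_sum continuous_on_scaleR continuous_on_divide c1 cD Dne continuous_on_const)
  have maps: "f ` stdsimp \<subseteq> stdsimp"
  proof clarify
    fix x :: 'b assume x: "x \<in> stdsimp"
    have "(\<Sum>j\<in>Basis. f x \<bullet> j) = (\<Sum>j\<in>Basis. infdist x (C j)) / D x"
      by (simp add: fcoord sum_divide_distrib)
    also have "\<dots> = 1" using Dpos[OF x] by (simp add: D_def)
    finally have s1: "(\<Sum>j\<in>Basis. f x \<bullet> j) = 1" .
    have "\<forall>j\<in>Basis. 0 \<le> f x \<bullet> j"
    proof
      fix j :: 'b assume j: "j \<in> Basis"
      show "0 \<le> f x \<bullet> j" unfolding fcoord[OF j]
        using Dpos[OF x] infdist_nonneg[of x "C j"] by simp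
    qed
    then show "f x \<in> stdsimp" unfolding stdsimp_def using s1 by simp
  qed
  have sne: "(stdsimp :: 'b set) \<noteq> {}" using stdsimp_Basis[OF SOME_Basis] by blast
  have maps': "f \<in> stdsimp \<rightarrow> stdsimp" using maps by blast
  obtain x where x: "x \<in> stdsimp" "f x = x"
    using brouwer[OF stdsimp_compact stdsimp_convex sne cont maps'] by blast
  obtain j where j: "j \<in> Basis" "0 < x \<bullet> j" "x \<in> C j" using face x(1) by blast
  have "infdist x (C j) = 0" using j(3) by simp
  then have "x \<bullet> j = 0" using fcoord[OF j(1), of x] x(2) by simp
  with j(2) show False by simp
qed


lemma ray_hit:
  fixes a v q :: "'a::euclidean_space"
  assumes "0 < (a \<bullet> v) * (b - a \<bullet> q)"
  shows "\<exists>t>0. q + t *\<^sub>R v \<in> {x. a \<bullet> x = b}"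
proof -
  have av: "a \<bullet> v \<noteq> 0" using assms by auto
  define t where "t = (b - a \<bullet> q) / (a \<bullet> v)"
  have "0 < t" unfolding t_def using assms by (auto simp add: zero_less_divide_iff zero_less_mult_iff)
  moreover have "a \<bullet> (q + t *\<^sub>R v) = b"
    using av by (simp add: t_def inner_add_right)
  ultimately show ?thesis by auto
qed

lemma closed_card_ge:
  fixes P :: "'h \<Rightarrow> 'b::topological_space set"
  assumes fin: "finite A" and cl: "\<forall>H\<in>A. closed (P H)"
  shows "closed {x. K \<le> card {H\<in>A. x \<in> P H}}"
proof -
  define Bs where "Bs = {B. B \<subseteq> A \<and> card B = K}"
  have eq: "{x. K \<le> card {H\<in>A. x \<in> P H}} = \<Union>((\<lambda>B. \<Inter>H\<in>B. P H) ` Bs)"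
  proof (intro set_eqI iffI)
    fix x assume "x \<in> {x. K \<le> card {H\<in>A. x \<in> P H}}"
    then have "K \<le> card {H\<in>A. x \<in> P H}" by simp
    then obtain T where T: "T \<subseteq> {H\<in>A. x \<in> P H}" "card T = K" by (rule obtain_subset_with_card_n)
    then have "T \<in> Bs" unfolding Bs_def by auto
    moreover have "x \<in> (\<Inter>H\<in>T. P H)" using T by auto
    ultimately show "x \<in> \<Union>((\<lambda>B. \<Inter>H\<in>B. P H) ` Bs)" by blast
  next
    fix x assume "x \<in> \<Union>((\<lambda>B. \<Inter>H\<in>B. P H) ` Bs)"
    then obtain B where B: "B \<subseteq> A" "card B = K" "x \<in> (\<Inter>H\<in>B. P H)" unfolding Bs_def by blast
    then have "B \<subseteq> {H\<in>A. x \<in> P H}" by auto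
    moreover have "finite {H\<in>A. x \<in> P H}" using fin by simp
    ultimately have "card B \<le> card {H\<in>A. x \<in> P H}" by (rule card_mono[rotated])
    then show "x \<in> {x. K \<le> card {H\<in>A. x \<in> P H}}" using B by simp
  qed
  have "finite Bs" unfolding Bs_def by (rule finite_subset[of _ "Pow A"]) (use fin in auto)
  then have fB: "finite ((\<lambda>B. \<Inter>H\<in>B. P H) ` Bs)" by (rule finite_imageI)
  have cB: "\<forall>T\<in>(\<lambda>B. \<Inter>H\<in>B. P H) ` Bs. closed T"
  proof
    fix T assume "T \<in> (\<lambda>B. \<Inter>H\<in>B. P H) ` Bs"
    then obtain B where B: "B \<in> Bs" "T = (\<Inter>H\<in>B. P H)" by blast
    have "\<forall>H\<in>B. closed (P H)" using B(1) cl unfolding Bs_def by blast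
    then show "closed T" unfolding B(2) by (rule closed_INT)
  qed
  show ?thesis unfolding eq by (rule closed_Union[OF fB cB])
qed

lemma uniform_pos:
  assumes "finite Bs" and "\<forall>B\<in>Bs. \<exists>e>0. \<forall>x\<in>S. (e::real) \<le> F B x"
  shows "\<exists>e>0. \<forall>B\<in>Bs. \<forall>x\<in>S. e \<le> F B x"
  using assms
proof (induction Bs rule: finite_induct)
  case empty then show ?case by (intro exI[of _ 1]) auto
next
  case (insert B Bs)
  then obtain e1 where e1: "e1 > 0" "\<forall>B\<in>Bs. \<forall>x\<in>S. e1 \<le> F B x" by auto
  obtain e2 where e2: "e2 > 0" "\<forall>x\<in>S. e2 \<le> F B x" using insert.prems by auto
  show ?case
  proof (intro exI[of _ "min e1 e2"] conjI ballI)
    show "0 < min e1 e2" using e1 e2 by simp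
    fix B' x assume "B' \<in> insert B Bs" "x \<in> S"
    then show "min e1 e2 \<le> F B' x" using e1 e2 by (auto intro: min.coboundedI1 min.coboundedI2)
  qed
qed

lemma both_signs:
  fixes c y :: "'i \<Rightarrow> real"
  assumes fin: "finite I" and cp: "\<forall>i\<in>I. 0 < c i" and s0: "(\<Sum>i\<in>I. c i * y i) = 0"
    and i0: "i0 \<in> I" "y i0 \<noteq> 0"
  shows "(\<exists>i\<in>I. 0 < y i) \<and> (\<exists>i\<in>I. y i < 0)"
proof (rule conjI; rule ccontr)
  assume "\<not> (\<exists>i\<in>I. 0 < y i)"
  then have nn: "\<forall>i\<in>I. 0 \<le> - (c i * y i)" using cp by (auto simp: mult_le_0_iff not_less)
  have s1: "(\<Sum>i\<in>I. - (c i * y i)) = 0" using s0 by (simp add: sum_negf)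
  have "(\<Sum>i\<in>I. - (c i * y i)) = 0 \<longleftrightarrow> (\<forall>i\<in>I. - (c i * y i) = 0)"
    by (rule sum_nonneg_eq_0_iff[OF fin]) (use nn in blast)
  with s1 have "\<forall>i\<in>I. - (c i * y i) = 0" by simp
  then have "c i0 * y i0 = 0" using i0(1) by auto
  moreover have "0 < c i0" using cp i0(1) by simp
  ultimately show False using i0(2) by simp
next
  assume "\<not> (\<exists>i\<in>I. y i < 0)"
  then have nn: "\<forall>i\<in>I. 0 \<le> c i * y i" using cp by (auto simp: not_less)
  have "(\<Sum>i\<in>I. c i * y i) = 0 \<longleftrightarrow> (\<forall>i\<in>I. c i * y i = 0)"
    by (rule sum_nonneg_eq_0_iff[OF fin]) (use nn in blast)
  with s0 have "\<forall>i\<in>I. c i * y i = 0" by simp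
  then have "c i0 * y i0 = 0" using i0(1) by auto
  moreover have "0 < c i0" using cp i0(1) by simp
  ultimately show False using i0(2) by simp
qed


lemma stdsimp_ne: "(stdsimp :: 'b::euclidean_space set) \<noteq> {}"
  using stdsimp_Basis[OF SOME_Basis] by blast

lemma ray_count_ge:
  fixes A :: "'a::euclidean_space set set"
  assumes fin: "finite A" and hyp: "\<forall>H\<in>A. H = {x. na H \<bullet> x = nb H}"
    and XA: "X \<subseteq> A" and pos: "\<forall>H\<in>X. 0 < (na H \<bullet> v) * (nb H - na H \<bullet> q)"
  shows "card X \<le> ray_count A v q"
proof -
  have "X \<subseteq> {H \<in> A. \<exists>t::real. t > 0 \<and> q + t *\<^sub>R v \<in> H}"
  proof
    fix H assume H: "H \<in> X"
    then have HA: "H \<in> A" using XA by blast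
    have "\<exists>t>0. q + t *\<^sub>R v \<in> {x. na H \<bullet> x = nb H}" using ray_hit pos H by blast
    then have "\<exists>t>0. q + t *\<^sub>R v \<in> H" using hyp HA by blast
    then show "H \<in> {H \<in> A. \<exists>t::real. t > 0 \<and> q + t *\<^sub>R v \<in> H}" using HA by blast
  qed
  moreover have "finite {H \<in> A. \<exists>t::real. t > 0 \<and> q + t *\<^sub>R v \<in> H}" using fin by simp
  ultimately show ?thesis unfolding ray_count_def by (rule card_mono[rotated])
qed


lemma core:
  fixes A :: "'a::euclidean_space set set" and L :: "'a \<times> real \<Rightarrow> 'a"
    and na :: "'a set \<Rightarrow> 'a" and nb :: "'a set \<Rightarrow> real" and K :: nat
  assumes fin: "finite A"
    and hyp: "\<forall>H\<in>A. na H \<noteq> 0 \<and> H = {x. na H \<bullet> x = nb H}"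
    and gp1: "\<forall>B\<subseteq>A. card B = DIM('a) \<longrightarrow> (\<exists>p. \<Inter>B = {p})"
    and gp2: "\<forall>B\<subseteq>A. card B = Suc DIM('a) \<longrightarrow> \<Inter>B = {}"
    and K1: "1 \<le> K" and Kn: "Suc DIM('a) * K \<le> card A"
    and dirs: "(\<forall>x\<in>stdsimp. (\<Sum>j\<in>Basis. (x \<bullet> j) *\<^sub>R L j) \<noteq> 0) \<or>
       ((\<exists>c. (\<forall>j\<in>Basis. 0 < c j) \<and> (\<Sum>j\<in>Basis. c j *\<^sub>R L j) = 0) \<and>
        (\<forall>a::'a. a \<noteq> 0 \<longrightarrow> (\<exists>j\<in>Basis. a \<bullet> L j \<noteq> 0)) \<and>
        (\<forall>x\<in>stdsimp. (\<exists>j\<in>Basis. x \<bullet> j = 0) \<longrightarrow> (\<Sum>j\<in>Basis. (x \<bullet> j) *\<^sub>R L j) \<noteq> 0))"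
  shows "\<exists>q. \<forall>j\<in>(Basis :: ('a \<times> real) set). K \<le> ray_count A (L j) q"
proof -
  let ?d = "DIM('a)"
  let ?S = "stdsimp :: ('a \<times> real) set"
  define nz where "nz \<longleftrightarrow> (\<forall>x\<in>?S. (\<Sum>j\<in>Basis. (x \<bullet> j) *\<^sub>R L j) \<noteq> 0)"
  define U where "U x = (\<Sum>j\<in>Basis. (x \<bullet> j) *\<^sub>R L j)" for x :: "'a \<times> real"
  define rho :: real where "rho = (if nz then 0 else 1)"
  define r where "r x = rho * (\<Prod>j\<in>Basis. x \<bullet> j)" for x :: "'a \<times> real"
  define g where "g H x = na H \<bullet> U x + nb H * r x" for H x
  have hypA: "\<forall>H\<in>A. H = {x. na H \<bullet> x = nb H}" using hyp by blast
  have POS: "(\<exists>c. (\<forall>j\<in>Basis. 0 < c j) \<and> (\<Sum>j\<in>Basis. c j *\<^sub>R L j) = 0) \<and>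
        (\<forall>a::'a. a \<noteq> 0 \<longrightarrow> (\<exists>j\<in>Basis. a \<bullet> L j \<noteq> 0)) \<and>
        (\<forall>x\<in>?S. (\<exists>j\<in>Basis. x \<bullet> j = 0) \<longrightarrow> (\<Sum>j\<in>Basis. (x \<bullet> j) *\<^sub>R L j) \<noteq> 0)"
    if "\<not> nz"
    using dirs that unfolding nz_def by blast
  have r_nonneg: "0 \<le> r x" if "x \<in> ?S" for x
  proof -
    have "0 \<le> (\<Prod>j\<in>Basis. x \<bullet> j)" using that unfolding stdsimp_def by (intro prod_nonneg) auto
    moreover have "0 \<le> rho" unfolding rho_def by simp
    ultimately show ?thesis unfolding r_def by simp
  qed
  have F1: "U x \<noteq> 0" if x: "x \<in> ?S" and rx: "r x = 0" for x
  proof (cases nz)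
    case True then show ?thesis using x unfolding nz_def U_def by blast
  next
    case False
    then have "(\<Prod>j\<in>Basis. x \<bullet> j) = 0" using rx unfolding r_def rho_def by simp
    then have "\<exists>j\<in>Basis. x \<bullet> j = 0" by (simp add: prod_zero_iff)
    then show ?thesis using POS[OF False] x unfolding U_def by blast
  qed
  have F2: "\<not> nz \<and> (\<forall>j\<in>Basis. 0 < x \<bullet> j)" if x: "x \<in> ?S" and rx: "0 < r x" for x
  proof
    show nnz: "\<not> nz" using rx unfolding r_def rho_def by auto
    show "\<forall>j\<in>Basis. 0 < x \<bullet> j"
    proof
      fix j :: "'a \<times> real" assume j: "j \<in> Basis"
      have "r x = (\<Prod>j\<in>Basis. x \<bullet> j)" unfolding r_def rho_def using nnz by simp
      then have "(\<Prod>j\<in>Basis. x \<bullet> j) \<noteq> 0" using rx by linarith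
      then have "x \<bullet> j \<noteq> 0" using prod_zero[OF finite_Basis, of "\<lambda>j. x \<bullet> j"] j by blast
      moreover have "0 \<le> x \<bullet> j" using x j unfolding stdsimp_def by blast
      ultimately show "0 < x \<bullet> j" by simp
    qed
  qed
  have F4: "g H x = r x * (nb H - na H \<bullet> (- (1 / r x) *\<^sub>R U x))" if "0 < r x" for H x
    using that unfolding g_def by (simp add: field_simps inner_minus_right)
  have F5: "(\<exists>j\<in>Basis. 0 < na H \<bullet> L j) \<and> (\<exists>j\<in>Basis. na H \<bullet> L j < 0)"
    if nnz: "\<not> nz" and H: "H \<in> A" for H
  proof -
    obtain c where c: "\<forall>j\<in>Basis. 0 < c j" "(\<Sum>j\<in>Basis. c j *\<^sub>R L j) = 0"
      using POS[OF nnz] by blast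
    have "na H \<noteq> 0" using hyp H by blast
    then obtain j0 where j0: "j0 \<in> Basis" "na H \<bullet> L j0 \<noteq> 0" using POS[OF nnz] by blast
    have "(\<Sum>j\<in>Basis. c j * (na H \<bullet> L j)) = na H \<bullet> (\<Sum>j\<in>Basis. c j *\<^sub>R L j)"
      by (simp add: inner_sum_right)
    also have "\<dots> = 0" using c(2) by simp
    finally have s0: "(\<Sum>j\<in>Basis. c j * (na H \<bullet> L j)) = 0" .
    show ?thesis by (rule both_signs[OF finite_Basis c(1) s0 j0])
  qed
  define Bs where "Bs = {B. B \<subseteq> A \<and> card B = Suc ?d}"
  have cU: "continuous_on ?S (\<lambda>x. na H \<bullet> U x)" for H
    unfolding U_def
    by (intro continuous_on_inner continuous_on_const continuous_on_sum continuous_on_scaleR continuous_on_id)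
  have cr: "continuous_on ?S r"
    unfolding r_def
    by (intro continuous_on_mult continuous_on_const continuous_on_prod continuous_on_inner continuous_on_id)
  have cg: "continuous_on ?S (g H)" for H
    unfolding g_def
    by (intro continuous_on_add continuous_on_mult cU cr continuous_on_const)
  have Bpos: "\<exists>e>0. \<forall>x\<in>?S. e \<le> (\<Sum>H\<in>B. \<bar>g H x\<bar>)" if B: "B \<in> Bs" for B
  proof -
    have BA: "B \<subseteq> A" and cB: "card B = Suc ?d" using B unfolding Bs_def by auto
    have finB: "finite B" using BA fin by (rule finite_subset)
    have cs: "continuous_on ?S (\<lambda>x. \<Sum>H\<in>B. \<bar>g H x\<bar>)"
      by (intro continuous_on_sum continuous_on_rabs cg)
    obtain x0 where x0: "x0 \<in> ?S" "\<forall>y\<in>?S. (\<Sum>H\<in>B. \<bar>g H x0\<bar>) \<le> (\<Sum>H\<in>B. \<bar>g H y\<bar>)"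
      using continuous_attains_inf[OF stdsimp_compact stdsimp_ne cs] by blast
    have "0 < (\<Sum>H\<in>B. \<bar>g H x0\<bar>)"
    proof (rule ccontr)
      assume "\<not> ?thesis"
      moreover have "0 \<le> (\<Sum>H\<in>B. \<bar>g H x0\<bar>)" by (rule sum_nonneg) simp
      ultimately have s0: "(\<Sum>H\<in>B. \<bar>g H x0\<bar>) = 0" by simp
      have "(\<Sum>H\<in>B. \<bar>g H x0\<bar>) = 0 \<longleftrightarrow> (\<forall>H\<in>B. \<bar>g H x0\<bar> = 0)"
        by (rule sum_nonneg_eq_0_iff[OF finB]) simp
      with s0 have z: "\<forall>H\<in>B. g H x0 = 0" by simp
      show False
      proof (cases "0 < r x0")
        case True
        define q where "q = - (1 / r x0) *\<^sub>R U x0"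
        have "q \<in> \<Inter>B"
        proof
          fix H assume H: "H \<in> B"
          then have HA: "H \<in> A" using BA by blast
          have "r x0 * (nb H - na H \<bullet> q) = 0" using z H F4[OF True, of H] unfolding q_def by simp
          then have "na H \<bullet> q = nb H" using True by simp
          then show "q \<in> H" using hypA HA by blast
        qed
        moreover have "\<Inter>B = {}" using gp2 BA cB by blast
        ultimately show False by blast
      next
        case False
        then have r0: "r x0 = 0" using r_nonneg[OF x0(1)] by linarith
        have U0: "U x0 \<noteq> 0" by (rule F1[OF x0(1) r0])
        have zU: "na H \<bullet> U x0 = 0" if "H \<in> B" for H
          using z that r0 unfolding g_def by simp
        have "?d \<le> card B" using cB by simp
        then obtain B' where B': "B' \<subseteq> B" "card B' = ?d" by (rule obtain_subset_with_card_n)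
        then have "B' \<subseteq> A" using BA by blast
        then obtain p where p: "\<Inter>B' = {p}" using gp1 B'(2) by blast
        have "p + U x0 \<in> \<Inter>B'"
        proof
          fix H assume H: "H \<in> B'"
          then have HA: "H \<in> A" using BA B'(1) by blast
          have "p \<in> H" using p H by blast
          then have "na H \<bullet> p = nb H" using hypA HA by blast
          moreover have "na H \<bullet> U x0 = 0" using zU H B'(1) by blast
          ultimately have "na H \<bullet> (p + U x0) = nb H" by (simp add: inner_add_right)
          then show "p + U x0 \<in> H" using hypA HA by blast
        qed
        then have "p + U x0 = p" using p by blast
        then show False using U0 by simp
      qed
    qed
    then show ?thesis using x0 by (intro exI[of _ "\<Sum>H\<in>B. \<bar>g H x0\<bar>"]) auto
  qed
  have finBs: "finite Bs" unfolding Bs_def by (rule finite_subset[of _ "Pow A"]) (use fin in auto)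
  obtain e where e: "e > 0" "\<forall>B\<in>Bs. \<forall>x\<in>?S. e \<le> (\<Sum>H\<in>B. \<bar>g H x\<bar>)"
    using uniform_pos[OF finBs, of ?S "\<lambda>B x. \<Sum>H\<in>B. \<bar>g H x\<bar>"] Bpos by blast
  define eps where "eps = e / real (Suc ?d)"
  have epspos: "0 < eps" unfolding eps_def using e(1) by simp
  have bad: "card {H\<in>A. \<bar>g H x\<bar> < eps} \<le> ?d" if x: "x \<in> ?S" for x
  proof (rule ccontr)
    assume "\<not> ?thesis"
    then have "Suc ?d \<le> card {H\<in>A. \<bar>g H x\<bar> < eps}" by simp
    then obtain B where B: "B \<subseteq> {H\<in>A. \<bar>g H x\<bar> < eps}" "card B = Suc ?d"
      by (rule obtain_subset_with_card_n)
    then have BBs: "B \<in> Bs" unfolding Bs_def by auto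
    have finB: "finite B" using B(2) by (simp add: card_ge_0_finite)
    have Bne: "B \<noteq> {}" using B(2) by auto
    have "(\<Sum>H\<in>B. \<bar>g H x\<bar>) < (\<Sum>H\<in>B. eps)"
      using B(1) by (intro sum_strict_mono[OF finB Bne]) auto
    also have "\<dots> = e" using B(2) unfolding eps_def by simp
    finally show False using e(2) BBs x by fastforce
  qed
  define D0 where "D0 = (\<lambda>p. \<bar>na (fst p) \<bullet> L (snd p)\<bar>) ` {p \<in> A \<times> (Basis :: ('a \<times> real) set). na (fst p) \<bullet> L (snd p) \<noteq> 0}"
  have finD0: "finite D0" unfolding D0_def using fin by simp
  define d0 where "d0 = Min (insert 1 D0)"
  have d0pos: "0 < d0" unfolding d0_def using finD0 by (auto simp: D0_def)
  have d0le: "d0 \<le> \<bar>na H \<bullet> L j\<bar>" if "H \<in> A" "j \<in> Basis" "na H \<bullet> L j \<noteq> 0" for H j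
  proof -
    have "\<bar>na H \<bullet> L j\<bar> \<in> D0" unfolding D0_def using that by (auto intro!: image_eqI[of _ _ "(H, j)"])
    then show ?thesis unfolding d0_def using finD0 by simp
  qed
  define delta where "delta = min (d0 * eps) (eps * eps)"
  have delta: "0 < delta" unfolding delta_def using d0pos epspos by simp
  define X where "X x j = {H\<in>A. delta \<le> (na H \<bullet> L j) * g H x}" for x j
  define C where "C j = ?S \<inter> {x. K \<le> card {H\<in>A. x \<in> {y. delta \<le> (na H \<bullet> L j) * g H y}}}" for j
  have clC: "\<forall>j\<in>Basis. closed (C j)"
  proof
    fix j :: "'a \<times> real" assume j: "j \<in> Basis"
    have "\<forall>H\<in>A. closed {y. delta \<le> (na H \<bullet> L j) * g H y}"
    proof
      fix H assume "H \<in> A"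
      have "continuous_on UNIV (g H)" unfolding g_def U_def r_def
        by (intro continuous_on_add continuous_on_mult continuous_on_inner continuous_on_const
            continuous_on_sum continuous_on_scaleR continuous_on_id continuous_on_prod)
      then have "continuous_on UNIV (\<lambda>y. (na H \<bullet> L j) * g H y)"
        by (intro continuous_on_mult continuous_on_const)
      then show "closed {y. delta \<le> (na H \<bullet> L j) * g H y}"
        by (intro closed_Collect_le continuous_on_const)
    qed
    then have "closed {x. K \<le> card {H\<in>A. x \<in> {y. delta \<le> (na H \<bullet> L j) * g H y}}}"
      by (rule closed_card_ge[OF fin])
    then show "closed (C j)" unfolding C_def
      by (rule closed_Int[OF compact_imp_closed[OF stdsimp_compact]])
  qed
  have face: "\<forall>x\<in>?S. \<exists>j\<in>Basis. 0 < x \<bullet> j \<and> x \<in> C j"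
  proof
    fix x assume x: "x \<in> ?S"
    define Good where "Good = {H\<in>A. eps \<le> \<bar>g H x\<bar>}"
    define J where "J = {j\<in>(Basis :: ('a \<times> real) set). 0 < x \<bullet> j}"
    have Geq: "Good = A - {H\<in>A. \<bar>g H x\<bar> < eps}" unfolding Good_def by auto
    have "card Good = card A - card {H\<in>A. \<bar>g H x\<bar> < eps}"
      unfolding Geq by (rule card_Diff_subset) (use fin in auto)
    then have cG: "card A - ?d \<le> card Good" using bad[OF x] by simp
    have hit: "\<exists>j\<in>J. H \<in> X x j" if H: "H \<in> Good" for H
    proof -
      have HA: "H \<in> A" and ge: "eps \<le> \<bar>g H x\<bar>" using H unfolding Good_def by auto
      show ?thesis
      proof (cases "0 < r x")
        case True
        note F2x = F2[OF x True]
        have gne: "g H x \<noteq> 0" using ge epspos by auto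
        obtain j where j: "j \<in> Basis" "0 < (na H \<bullet> L j) * g H x"
        proof (cases "0 < g H x")
          case True
          obtain j where "j \<in> Basis" "0 < na H \<bullet> L j" using F5[OF conjunct1[OF F2x] HA] by blast
          then show ?thesis using that True by (meson mult_pos_pos)
        next
          case False
          then have gn: "g H x < 0" using gne by simp
          obtain j where "j \<in> Basis" "na H \<bullet> L j < 0" using F5[OF conjunct1[OF F2x] HA] by blast
          then show ?thesis using that gn by (meson mult_neg_neg)
        qed
        have nz0: "na H \<bullet> L j \<noteq> 0" using j(2) by auto
        have "(na H \<bullet> L j) * g H x = \<bar>na H \<bullet> L j\<bar> * \<bar>g H x\<bar>"
          using j(2) by (simp add: abs_mult[symmetric])
        also have "\<dots> \<ge> d0 * eps"
          by (rule mult_mono[OF d0le[OF HA j(1) nz0] ge]) (use d0pos epspos in auto)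
        finally have "delta \<le> (na H \<bullet> L j) * g H x" unfolding delta_def by linarith
        moreover have "j \<in> J" unfolding J_def using j(1) conjunct2[OF F2x] by blast
        ultimately show ?thesis unfolding X_def using HA by blast
      next
        case False
        then have r0: "r x = 0" using r_nonneg[OF x] by linarith
        define s where "s = g H x"
        have sU: "s = na H \<bullet> U x" unfolding s_def g_def r0 by simp
        have xs: "(\<Sum>j\<in>Basis. (x \<bullet> j) * ((na H \<bullet> L j) * s)) = s * s"
        proof -
          have "(\<Sum>j\<in>Basis. (x \<bullet> j) * ((na H \<bullet> L j) * s)) = (\<Sum>j\<in>Basis. (x \<bullet> j) * (na H \<bullet> L j)) * s"
            by (simp add: sum_distrib_right mult.assoc)
          also have "(\<Sum>j\<in>Basis. (x \<bullet> j) * (na H \<bullet> L j)) = na H \<bullet> U x"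
            unfolding U_def by (simp add: inner_sum_right)
          finally show ?thesis using sU by simp
        qed
        have sge: "eps * eps \<le> s * s"
        proof -
          have "eps * eps \<le> \<bar>s\<bar> * \<bar>s\<bar>" using ge epspos unfolding s_def by (intro mult_mono) auto
          then show ?thesis by (simp add: abs_mult[symmetric])
        qed
        show ?thesis
        proof (rule ccontr)
          assume nh: "\<not> ?thesis"
          have lt: "\<forall>j\<in>Basis. 0 < x \<bullet> j \<longrightarrow> (na H \<bullet> L j) * s < delta"
          proof (intro ballI impI)
            fix j :: "'a \<times> real" assume j: "j \<in> Basis" "0 < x \<bullet> j"
            then have "j \<in> J" unfolding J_def by blast
            then have "H \<notin> X x j" using nh by blast
            then have "\<not> delta \<le> (na H \<bullet> L j) * g H x" using HA unfolding X_def by blast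
            then show "(na H \<bullet> L j) * s < delta" unfolding s_def by linarith
          qed
          have xnn: "\<forall>j\<in>Basis. 0 \<le> x \<bullet> j" and xs1: "(\<Sum>j\<in>Basis. x \<bullet> j) = 1"
            using x unfolding stdsimp_def by auto
          obtain j1 where j1: "j1 \<in> Basis" "0 < x \<bullet> j1"
          proof (rule ccontr)
            assume "\<not> thesis"
            then have "\<forall>j\<in>Basis. x \<bullet> j = 0" using that xnn by (metis less_eq_real_def)
            then have "(\<Sum>j\<in>Basis. x \<bullet> j) = 0" by simp
            with xs1 show False by simp
          qed
          have "(\<Sum>j\<in>Basis. (x \<bullet> j) * ((na H \<bullet> L j) * s)) < (\<Sum>j\<in>Basis. (x \<bullet> j) * delta)"
          proof (rule sum_strict_mono_ex1[OF finite_Basis])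
            show "\<forall>j\<in>Basis. (x \<bullet> j) * ((na H \<bullet> L j) * s) \<le> (x \<bullet> j) * delta"
            proof
              fix j :: "'a \<times> real" assume j: "j \<in> Basis"
              show "(x \<bullet> j) * ((na H \<bullet> L j) * s) \<le> (x \<bullet> j) * delta"
              proof (cases "x \<bullet> j = 0")
                case True then show ?thesis by simp
              next
                case False
                moreover have "0 \<le> x \<bullet> j" using xnn j by blast
                ultimately have "0 < x \<bullet> j" by linarith
                then show ?thesis using lt j by (intro mult_left_mono) auto
              qed
            qed
            show "\<exists>j\<in>Basis. (x \<bullet> j) * ((na H \<bullet> L j) * s) < (x \<bullet> j) * delta"
              using j1 lt by (intro bexI[of _ j1]) auto
          qed
          also have "\<dots> = delta" using xs1 by (simp add: sum_distrib_right[symmetric])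
          finally have "s * s < delta" using xs by simp
          moreover have "delta \<le> eps * eps" unfolding delta_def by simp
          ultimately show False using sge by linarith
        qed
      qed
    qed
    have finJ: "finite J" unfolding J_def by simp
    have "Good \<subseteq> (\<Union>j\<in>J. X x j)" using hit by blast
    moreover have "finite (\<Union>j\<in>J. X x j)" using fin finJ unfolding X_def by auto
    ultimately have "card Good \<le> card (\<Union>j\<in>J. X x j)" by (rule card_mono[rotated])
    also have "\<dots> \<le> (\<Sum>j\<in>J. card (X x j))" by (rule card_UN_le[OF finJ])
    finally have cGs: "card Good \<le> (\<Sum>j\<in>J. card (X x j))" .
    show "\<exists>j\<in>Basis. 0 < x \<bullet> j \<and> x \<in> C j"
    proof (rule ccontr)
      assume nn: "\<not> ?thesis"
      have small: "card (X x j) \<le> K - 1" if "j \<in> J" for j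
      proof -
        have "x \<notin> C j" using nn that unfolding J_def by blast
        then have "\<not> K \<le> card (X x j)" using x unfolding C_def X_def by simp
        then show ?thesis by simp
      qed
      have "(\<Sum>j\<in>J. card (X x j)) \<le> (\<Sum>j\<in>J. K - 1)" by (rule sum_mono) (use small in blast)
      also have "\<dots> = card J * (K - 1)" by simp
      also have "\<dots> \<le> Suc ?d * (K - 1)"
      proof -
        have "card J \<le> card (Basis :: ('a \<times> real) set)" unfolding J_def by (rule card_mono) auto
        then have "card J \<le> Suc ?d" by simp
        then show ?thesis by (rule mult_right_mono) simp
      qed
      finally have "card A - ?d \<le> Suc ?d * (K - 1)" using cG cGs by linarith
      moreover have "Suc ?d * (K - 1) + Suc ?d = Suc ?d * K" using K1 by (cases K) auto
      ultimately show False using Kn by linarith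
    qed
  qed
  obtain xs where xs: "xs \<in> ?S" "\<forall>j\<in>Basis. xs \<in> C j" using kkm[OF clC face] by blast
  have KX: "K \<le> card (X xs j)" if "j \<in> Basis" for j
    using xs that unfolding C_def X_def by simp
  have XA: "X xs j \<subseteq> A" for j unfolding X_def by blast
  have Xpos: "0 < (na H \<bullet> L j) * g H xs" if "H \<in> X xs j" for H j
    using that delta unfolding X_def by auto
  show ?thesis
  proof (cases "0 < r xs")
    case True
    define q where "q = - (1 / r xs) *\<^sub>R U xs"
    have "K \<le> ray_count A (L j) q" if j: "j \<in> Basis" for j
    proof -
      have "\<forall>H\<in>X xs j. 0 < (na H \<bullet> L j) * (nb H - na H \<bullet> q)"
      proof
        fix H assume H: "H \<in> X xs j"
        have "0 < (na H \<bullet> L j) * (r xs * (nb H - na H \<bullet> q))"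
          using Xpos[OF H] F4[OF True, of H] unfolding q_def by simp
        then have "0 < r xs * ((na H \<bullet> L j) * (nb H - na H \<bullet> q))" by (simp add: algebra_simps)
        then show "0 < (na H \<bullet> L j) * (nb H - na H \<bullet> q)"
          using True by (rule zero_less_mult_pos)
      qed
      then have "card (X xs j) \<le> ray_count A (L j) q"
        by (rule ray_count_ge[OF fin hypA XA])
      then show ?thesis using KX[OF j] by linarith
    qed
    then show ?thesis by blast
  next
    case False
    then have r0: "r xs = 0" using r_nonneg[OF xs(1)] by linarith
    define u where "u = U xs"
    define T where "T = 1 + (\<Sum>H\<in>A. \<bar>nb H\<bar> / \<bar>na H \<bullet> u\<bar>)"
    define q where "q = - T *\<^sub>R u"
    have Tbig: "\<bar>nb H\<bar> < T * \<bar>na H \<bullet> u\<bar>" if H: "H \<in> A" and nz: "na H \<bullet> u \<noteq> 0" for H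
    proof -
      have "\<bar>nb H\<bar> / \<bar>na H \<bullet> u\<bar> \<le> (\<Sum>H\<in>A. \<bar>nb H\<bar> / \<bar>na H \<bullet> u\<bar>)"
        by (rule member_le_sum[OF H _ fin]) simp
      then have "\<bar>nb H\<bar> / \<bar>na H \<bullet> u\<bar> < T" unfolding T_def by linarith
      then show ?thesis using nz by (simp add: divide_less_eq)
    qed
    have "K \<le> ray_count A (L j) q" if j: "j \<in> Basis" for j
    proof -
      have "\<forall>H\<in>X xs j. 0 < (na H \<bullet> L j) * (nb H - na H \<bullet> q)"
      proof
        fix H assume H: "H \<in> X xs j"
        then have HA: "H \<in> A" using XA by blast
        have p: "0 < (na H \<bullet> L j) * (na H \<bullet> u)"
          using Xpos[OF H] r0 unfolding g_def u_def by simp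
        then have snz: "na H \<bullet> u \<noteq> 0" by auto
        have tb: "\<bar>nb H\<bar> < T * \<bar>na H \<bullet> u\<bar>" by (rule Tbig[OF HA snz])
        have eq: "nb H - na H \<bullet> q = nb H + T * (na H \<bullet> u)" unfolding q_def by (simp add: inner_minus_right)
        show "0 < (na H \<bullet> L j) * (nb H - na H \<bullet> q)"
        proof (cases "0 < na H \<bullet> u")
          case True
          then have "0 < na H \<bullet> L j" using p by (simp add: zero_less_mult_iff)
          moreover have "0 < nb H + T * (na H \<bullet> u)" using tb True by (simp add: abs_if split: if_splits)
          ultimately show ?thesis unfolding eq by simp
        next
          case False
          then have neg: "na H \<bullet> u < 0" using snz by simp
          then have "na H \<bullet> L j < 0" using p by (simp add: zero_less_mult_iff)
          moreover have "nb H + T * (na H \<bullet> u) < 0" using tb neg by (simp add: abs_if split: if_splits)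
          ultimately show ?thesis unfolding eq by (simp add: mult_neg_neg)
        qed
      qed
      then have "card (X xs j) \<le> ray_count A (L j) q"
        by (rule ray_count_ge[OF fin hypA XA])
      then show ?thesis using KX[OF j] by linarith
    qed
    then show ?thesis by blast
  qed
qed

lemma fam_indep:
  fixes l :: "'i \<Rightarrow> 'a::euclidean_space"
  assumes fin: "finite F" and inj: "inj_on l F" and ind: "independent (l ` F)"
    and s0: "(\<Sum>i\<in>F. c i *\<^sub>R l i) = 0" and i: "i \<in> F"
  shows "c i = 0"
proof -
  define cc where "cc v = c (inv_into F l v)" for v
  have "(\<Sum>v\<in>l ` F. cc v *\<^sub>R v) = (\<Sum>i\<in>F. cc (l i) *\<^sub>R l i)"
    by (rule sum.reindex[OF inj, unfolded comp_def])
  also have "\<dots> = (\<Sum>i\<in>F. c i *\<^sub>R l i)"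
    by (rule sum.cong) (simp_all add: cc_def inv_into_f_f[OF inj])
  finally have "(\<Sum>v\<in>l ` F. cc v *\<^sub>R v) = 0" using s0 by simp
  then have "\<forall>v\<in>l ` F. cc v = 0" using ind unfolding independent_explicit by blast
  then have "cc (l i) = 0" using i by blast
  then show ?thesis unfolding cc_def using inv_into_f_f[OF inj i] by simp
qed

lemma nz_from_indep:
  fixes L :: "'b::euclidean_space \<Rightarrow> 'a::euclidean_space"
  assumes ind: "independent V" and x: "x \<in> stdsimp"
    and LV: "\<forall>j\<in>Basis. 0 < x \<bullet> j \<longrightarrow> L j \<in> V"
  shows "(\<Sum>j\<in>Basis. (x \<bullet> j) *\<^sub>R L j) \<noteq> 0"
proof
  assume z: "(\<Sum>j\<in>Basis. (x \<bullet> j) *\<^sub>R L j) = 0"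
  have finV: "finite V" using ind unfolding independent_explicit by blast
  define J where "J = {j\<in>(Basis :: 'b set). 0 < x \<bullet> j}"
  have finJ: "finite J" unfolding J_def by simp
  have xnn: "\<forall>j\<in>Basis. 0 \<le> x \<bullet> j" and xs1: "(\<Sum>j\<in>Basis. x \<bullet> j) = 1"
    using x unfolding stdsimp_def by auto
  have zero_out: "x \<bullet> j = 0" if "j \<in> Basis - J" for j
  proof -
    have "0 \<le> x \<bullet> j" using xnn that by blast
    moreover have "\<not> 0 < x \<bullet> j" using that unfolding J_def by blast
    ultimately show ?thesis by linarith
  qed
  have s1: "(\<Sum>j\<in>Basis. (x \<bullet> j) *\<^sub>R L j) = (\<Sum>j\<in>J. (x \<bullet> j) *\<^sub>R L j)"
    by (rule sum.mono_neutral_right) (use zero_out in \<open>auto simp: J_def\<close>)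
  have s2: "(\<Sum>j\<in>Basis. x \<bullet> j) = (\<Sum>j\<in>J. x \<bullet> j)"
    by (rule sum.mono_neutral_right) (use zero_out in \<open>auto simp: J_def\<close>)
  have LJ: "L ` J \<subseteq> V" using LV unfolding J_def by blast
  define cc where "cc v = (\<Sum>j\<in>{j\<in>J. L j = v}. x \<bullet> j)" for v
  have "(\<Sum>j\<in>J. (x \<bullet> j) *\<^sub>R L j) = (\<Sum>v\<in>V. \<Sum>j\<in>{j\<in>J. L j = v}. (x \<bullet> j) *\<^sub>R L j)"
    by (rule sum.group[OF finJ finV LJ, symmetric])
  also have "\<dots> = (\<Sum>v\<in>V. cc v *\<^sub>R v)"
  proof (rule sum.cong[OF refl])
    fix v assume "v \<in> V"
    have "(\<Sum>j\<in>{j\<in>J. L j = v}. (x \<bullet> j) *\<^sub>R L j) = (\<Sum>j\<in>{j\<in>J. L j = v}. (x \<bullet> j) *\<^sub>R v)"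
      by (rule sum.cong) auto
    also have "\<dots> = cc v *\<^sub>R v" unfolding cc_def by (simp add: scaleR_sum_left)
    finally show "(\<Sum>j\<in>{j\<in>J. L j = v}. (x \<bullet> j) *\<^sub>R L j) = cc v *\<^sub>R v" .
  qed
  finally have "(\<Sum>v\<in>V. cc v *\<^sub>R v) = 0" using z s1 by simp
  then have c0: "\<forall>v\<in>V. cc v = 0" using ind unfolding independent_explicit by blast
  have "(\<Sum>j\<in>J. x \<bullet> j) = (\<Sum>v\<in>V. cc v)"
    unfolding cc_def by (rule sum.group[OF finJ finV LJ, symmetric])
  also have "\<dots> = 0" using c0 by simp
  finally show False using xs1 s2 by simp
qed


lemma main_reduce:
  fixes A :: "'a::euclidean_space set set" and l :: "nat \<Rightarrow> 'a" and K :: nat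
  assumes fin: "finite A"
    and hyp: "\<forall>H\<in>A. na H \<noteq> 0 \<and> H = {x. na H \<bullet> x = nb H}"
    and gp1: "\<forall>B\<subseteq>A. card B = DIM('a) \<longrightarrow> (\<exists>p. \<Inter>B = {p})"
    and gp2: "\<forall>B\<subseteq>A. card B = Suc DIM('a) \<longrightarrow> \<Inter>B = {}"
    and K1: "1 \<le> K" and Kn: "Suc DIM('a) * K \<le> card A"
    and m: "m \<le> Suc DIM('a)" "1 \<le> m"
    and ind: "\<forall>I\<subseteq>{..<m}. card I \<le> DIM('a) \<longrightarrow> inj_on l I \<and> independent (l ` I)"
  shows "\<exists>q. \<forall>i<m. K \<le> ray_count A (l i) q"
proof -
  let ?d = "DIM('a)"
  let ?S = "stdsimp :: ('a \<times> real) set"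
  have cB: "card (Basis :: ('a \<times> real) set) = Suc ?d" by simp
  obtain e0 :: "nat \<Rightarrow> 'a \<times> real" where e0: "bij_betw e0 {0..<card (Basis :: ('a \<times> real) set)} Basis"
    using ex_bij_betw_nat_finite[OF finite_Basis] by blast
  have e: "bij_betw e0 {0..<Suc ?d} Basis" using e0 cB by simp
  define ie where "ie = inv_into {0..<Suc ?d} e0"
  have ie1: "ie j < Suc ?d \<and> e0 (ie j) = j" if "j \<in> Basis" for j
  proof -
    have "ie j \<in> {0..<Suc ?d}" unfolding ie_def using e that
      by (metis bij_betw_def inv_into_into)
    moreover have "e0 (ie j) = j" unfolding ie_def using e that
      by (metis bij_betw_def f_inv_into_f)
    ultimately show ?thesis by simp
  qed
  have ie2: "ie (e0 i) = i \<and> e0 i \<in> Basis" if "i < Suc ?d" for i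
  proof -
    have "inj_on e0 {0..<Suc ?d}" using e by (simp add: bij_betw_def)
    then have "ie (e0 i) = i" unfolding ie_def using that by (simp add: inv_into_f_f)
    moreover have "e0 i \<in> Basis" using e that by (auto simp: bij_betw_def)
    ultimately show ?thesis by simp
  qed
  define L where "L j = l (if ie j < m then ie j else 0)" for j
  have Le: "L (e0 i) = l i" if "i < m" for i
    using ie2[of i] that m(1) unfolding L_def by simp
  have dirs: "(\<forall>x\<in>?S. (\<Sum>j\<in>Basis. (x \<bullet> j) *\<^sub>R L j) \<noteq> 0) \<or>
       ((\<exists>c. (\<forall>j\<in>Basis. 0 < c j) \<and> (\<Sum>j\<in>Basis. c j *\<^sub>R L j) = 0) \<and>
        (\<forall>a::'a. a \<noteq> 0 \<longrightarrow> (\<exists>j\<in>Basis. a \<bullet> L j \<noteq> 0)) \<and>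
        (\<forall>x\<in>?S. (\<exists>j\<in>Basis. x \<bullet> j = 0) \<longrightarrow> (\<Sum>j\<in>Basis. (x \<bullet> j) *\<^sub>R L j) \<noteq> 0))"
  proof (cases "m \<le> ?d")
    case True
    have indm: "independent (l ` {..<m})" using ind True by simp
    have "\<forall>x\<in>?S. (\<Sum>j\<in>Basis. (x \<bullet> j) *\<^sub>R L j) \<noteq> 0"
    proof
      fix x assume x: "x \<in> ?S"
      have "\<forall>j\<in>Basis. 0 < x \<bullet> j \<longrightarrow> L j \<in> l ` {..<m}"
        unfolding L_def using m(2) by auto
      then show "(\<Sum>j\<in>Basis. (x \<bullet> j) *\<^sub>R L j) \<noteq> 0" by (rule nz_from_indep[OF indm x])
    qed
    then show ?thesis by blast
  next
    case False
    then have mS: "m = Suc ?d" using m(1) by simp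
    have Lie: "L j = l (ie j)" if "j \<in> Basis" for j
      using ie1[OF that] mS unfolding L_def by simp
    have indd: "inj_on l {..<?d}" "independent (l ` {..<?d})" using ind mS by auto
    have cardd: "card (l ` {..<?d}) = ?d" using card_image[OF indd(1)] by simp
    have span: "UNIV \<subseteq> span (l ` {..<?d})"
      by (rule card_ge_dim_independent) (use indd(2) cardd in auto)
    have finld: "finite (l ` {..<?d})" by simp
    have "l ?d \<in> span (l ` {..<?d})" using span by blast
    then obtain u where u: "l ?d = (\<Sum>v\<in>l ` {..<?d}. u v *\<^sub>R v)"
      unfolding span_finite[OF finld] by blast
    define beta where "beta i = u (l i)" for i
    have lsum: "l ?d = (\<Sum>i<?d. beta i *\<^sub>R l i)"
      unfolding u beta_def by (rule sum.reindex[OF indd(1), unfolded comp_def])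
    have betane: "beta i \<noteq> 0" if i: "i < ?d" for i
    proof
      assume b0: "beta i = 0"
      define F where "F = {..<Suc ?d} - {i}"
      have FF: "F = insert ?d ({..<?d} - {i})" unfolding F_def using i by auto
      have Fsub: "F \<subseteq> {..<m}" unfolding F_def mS by auto
      have cF: "card F = ?d" unfolding F_def using i by simp
      have iF: "inj_on l F" "independent (l ` F)" using ind Fsub cF by auto
      define c where "c j = (if j = ?d then -1 else beta j)" for j
      have "(\<Sum>j\<in>F. c j *\<^sub>R l j) = c ?d *\<^sub>R l ?d + (\<Sum>j\<in>{..<?d} - {i}. c j *\<^sub>R l j)"
        unfolding FF by (rule sum.insert) auto
      also have "(\<Sum>j\<in>{..<?d} - {i}. c j *\<^sub>R l j) = (\<Sum>j\<in>{..<?d} - {i}. beta j *\<^sub>R l j)"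
        unfolding c_def by (rule sum.cong) auto
      also have "\<dots> = (\<Sum>j<?d. beta j *\<^sub>R l j)"
      proof -
        have "(\<Sum>j<?d. beta j *\<^sub>R l j) = beta i *\<^sub>R l i + (\<Sum>j\<in>{..<?d} - {i}. beta j *\<^sub>R l j)"
          by (rule sum.remove) (use i in auto)
        then show ?thesis using b0 by simp
      qed
      finally have sF: "(\<Sum>j\<in>F. c j *\<^sub>R l j) = 0" using lsum unfolding c_def by simp
      have finF: "finite F" unfolding F_def by simp
      have dF: "?d \<in> F" unfolding F_def using i by simp
      have "c ?d = 0" by (rule fam_indep[OF finF iF sF dF])
      then show False unfolding c_def by simp
    qed
    have reidx: "(\<Sum>j\<in>Basis. G j) = (\<Sum>i\<in>{0..<Suc ?d}. G (e0 i))" for G :: "'a \<times> real \<Rightarrow> 'a"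
      by (rule sum.reindex_bij_betw[OF e, symmetric])
    have reidxr: "(\<Sum>j\<in>Basis. G j) = (\<Sum>i\<in>{0..<Suc ?d}. G (e0 i))" for G :: "'a \<times> real \<Rightarrow> real"
      by (rule sum.reindex_bij_betw[OF e, symmetric])
    have Le': "L (e0 i) = l i" if "i \<in> {0..<Suc ?d}" for i using Le that mS by simp
    show ?thesis
    proof (cases "\<forall>i<?d. beta i < 0")
      case True
      define c where "c j = (if ie j = ?d then 1 else - beta (ie j))" for j
      have cpos: "\<forall>j\<in>Basis. 0 < c j"
      proof
        fix j :: "'a \<times> real" assume j: "j \<in> Basis"
        show "0 < c j"
        proof (cases "ie j = ?d")
          case True then show ?thesis unfolding c_def by simp
        next
          case False
          then have "ie j < ?d" using ie1[OF j] by simp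
          then show ?thesis unfolding c_def using True False by simp
        qed
      qed
      have csum: "(\<Sum>j\<in>Basis. c j *\<^sub>R L j) = 0"
      proof -
        have "(\<Sum>j\<in>Basis. c j *\<^sub>R L j) = (\<Sum>i\<in>{0..<Suc ?d}. c (e0 i) *\<^sub>R L (e0 i))"
          by (rule reidx)
        also have "\<dots> = (\<Sum>i\<in>{0..<Suc ?d}. (if i = ?d then 1 else - beta i) *\<^sub>R l i)"
        proof (rule sum.cong[OF refl])
          fix i assume i: "i \<in> {0..<Suc ?d}"
          then have "ie (e0 i) = i" using ie2 by simp
          then show "c (e0 i) *\<^sub>R L (e0 i) = (if i = ?d then 1 else - beta i) *\<^sub>R l i"
            unfolding c_def using Le'[OF i] by simp
        qed
        also have "\<dots> = l ?d + (\<Sum>i\<in>{0..<?d}. (if i = ?d then 1 else - beta i) *\<^sub>R l i)"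
          by (simp add: atLeast0_lessThan_Suc)
        also have "(\<Sum>i\<in>{0..<?d}. (if i = ?d then 1 else - beta i) *\<^sub>R l i) = - (\<Sum>i<?d. beta i *\<^sub>R l i)"
          by (simp add: sum_negf atLeast0LessThan)
        finally show ?thesis using lsum by simp
      qed
      have spanL: "\<forall>a::'a. a \<noteq> 0 \<longrightarrow> (\<exists>j\<in>Basis. a \<bullet> L j \<noteq> 0)"
      proof (intro allI impI)
        fix a :: 'a assume a: "a \<noteq> 0"
        show "\<exists>j\<in>Basis. a \<bullet> L j \<noteq> 0"
        proof (rule ccontr)
          assume "\<not> ?thesis"
          then have al: "a \<bullet> l i = 0" if "i < ?d" for i
            using Le[of i] ie2[of i] that mS by auto
          have "a \<in> span (l ` {..<?d})" using span by blast
          then obtain w where w: "a = (\<Sum>v\<in>l ` {..<?d}. w v *\<^sub>R v)"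
            unfolding span_finite[OF finld] by blast
          have "a \<bullet> a = (\<Sum>v\<in>l ` {..<?d}. w v * (a \<bullet> v))"
            by (subst (2) w) (simp add: inner_sum_right)
          also have "\<dots> = 0" using al by (intro sum.neutral) auto
          finally show False using a by simp
        qed
      qed
      have supp: "\<forall>x\<in>?S. (\<exists>j\<in>Basis. x \<bullet> j = 0) \<longrightarrow> (\<Sum>j\<in>Basis. (x \<bullet> j) *\<^sub>R L j) \<noteq> 0"
      proof (intro ballI impI)
        fix x assume x: "x \<in> ?S" and "\<exists>j\<in>Basis. x \<bullet> j = 0"
        then obtain j0 where j0: "j0 \<in> Basis" "x \<bullet> j0 = 0" by blast
        define V where "V = l ` ({..<Suc ?d} - {ie j0})"
        have "{..<Suc ?d} - {ie j0} \<subseteq> {..<m}" using mS by auto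
        moreover have "card ({..<Suc ?d} - {ie j0}) = ?d" using ie1[OF j0(1)] by simp
        ultimately have indV: "independent V" unfolding V_def using ind by auto
        have "\<forall>j\<in>Basis. 0 < x \<bullet> j \<longrightarrow> L j \<in> V"
        proof (intro ballI impI)
          fix j :: "'a \<times> real" assume j: "j \<in> Basis" "0 < x \<bullet> j"
          then have "j \<noteq> j0" using j0 by auto
          then have "ie j \<noteq> ie j0" using ie1[OF j(1)] ie1[OF j0(1)] by metis
          then show "L j \<in> V" unfolding V_def Lie[OF j(1)] using ie1[OF j(1)] by auto
        qed
        then show "(\<Sum>j\<in>Basis. (x \<bullet> j) *\<^sub>R L j) \<noteq> 0" by (rule nz_from_indep[OF indV x])
      qed
      show ?thesis using cpos csum spanL supp by blast
    next
      case False
      then obtain i0 where i0: "i0 < ?d" "\<not> beta i0 < 0" by blast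
      then have bpos: "0 < beta i0" using betane[OF i0(1)] by linarith
      have "\<forall>x\<in>?S. (\<Sum>j\<in>Basis. (x \<bullet> j) *\<^sub>R L j) \<noteq> 0"
      proof (intro ballI notI)
        fix x assume x: "x \<in> ?S" and z: "(\<Sum>j\<in>Basis. (x \<bullet> j) *\<^sub>R L j) = 0"
        define y where "y i = x \<bullet> e0 i" for i
        have ynn: "0 \<le> y i" if "i < Suc ?d" for i
          using x ie2[OF that] unfolding stdsimp_def y_def by blast
        have ys1: "(\<Sum>i\<in>{0..<Suc ?d}. y i) = 1"
        proof -
          have "(\<Sum>j\<in>Basis. x \<bullet> j) = 1" using x unfolding stdsimp_def by blast
          then show ?thesis unfolding y_def reidxr[of "\<lambda>j. x \<bullet> j"] .
        qed
        have "(\<Sum>i\<in>{0..<Suc ?d}. y i *\<^sub>R l i) = (\<Sum>i\<in>{0..<Suc ?d}. (x \<bullet> e0 i) *\<^sub>R L (e0 i))"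
          unfolding y_def by (rule sum.cong) (simp_all add: Le')
        also have "\<dots> = 0" using z unfolding reidx[of "\<lambda>j. (x \<bullet> j) *\<^sub>R L j"] .
        finally have z2: "(\<Sum>i\<in>{0..<Suc ?d}. y i *\<^sub>R l i) = 0" .
        have "(\<Sum>i\<in>{0..<Suc ?d}. y i *\<^sub>R l i) = y ?d *\<^sub>R l ?d + (\<Sum>i<?d. y i *\<^sub>R l i)"
          by (simp add: atLeast0_lessThan_Suc atLeast0LessThan)
        also have "\<dots> = (\<Sum>i<?d. (y i + y ?d * beta i) *\<^sub>R l i)"
          unfolding lsum by (simp add: scaleR_sum_right scaleR_add_left sum.distrib)
        finally have z3: "(\<Sum>i<?d. (y i + y ?d * beta i) *\<^sub>R l i) = 0" using z2 by simp
        have co: "y i + y ?d * beta i = 0" if "i < ?d" for i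
          by (rule fam_indep[OF _ indd z3]) (use that in auto)
        show False
        proof (cases "y ?d = 0")
          case True
          then have "\<forall>i\<in>{0..<Suc ?d}. y i = 0" using co by (auto simp: less_Suc_eq)
          then have "(\<Sum>i\<in>{0..<Suc ?d}. y i) = 0" by simp
          then show False using ys1 by simp
        next
          case False
          then have "0 < y ?d" using ynn[of ?d] by simp
          then have "y ?d * beta i0 > 0" using bpos by simp
          moreover have "0 \<le> y i0" using ynn i0(1) by simp
          ultimately show False using co[OF i0(1)] by linarith
        qed
      qed
      then show ?thesis by blast
    qed
  qed
  obtain q where q: "\<forall>j\<in>Basis. K \<le> ray_count A (L j) q"
    using core[OF fin hyp gp1 gp2 K1 Kn dirs] by blast
  have "\<forall>i<m. K \<le> ray_count A (l i) q"
  proof (intro allI impI)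
    fix i assume i: "i < m"
    then have "e0 i \<in> Basis" using ie2[of i] m(1) by simp
    then show "K \<le> ray_count A (l i) q" using q Le[OF i] by metis
  qed
  then show ?thesis by blast
qed

theorem lemma5p4:
  fixes A :: "'a::euclidean_space set set"
    and l :: "nat \<Rightarrow> 'a" and m :: nat and k :: int
  assumes "finite A"
    and "\<forall>H\<in>A. is_hyperplane H"
    and "general_position A"
    and "m \<le> DIM('a) + 1"
    and "\<forall>i<m. l i \<noteq> 0"
    and "\<forall>I\<subseteq>{..<m}. card I \<le> DIM('a) \<longrightarrow> inj_on l I \<and> independent (l ` I)"
    and "k \<le> \<lceil>(real (card A) - real DIM('a)) / (real DIM('a) + 1)\<rceil>"
  shows "(\<Inter>i<m. R_A A k (l i)) \<noteq> {}"
proof (cases "k \<le> 0 \<or> m = 0")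
  case True
  have "0 \<in> (\<Inter>i<m. R_A A k (l i))"
  proof (cases "m = 0")
    case True then show ?thesis by simp
  next
    case False
    then have "k \<le> 0" using \<open>k \<le> 0 \<or> m = 0\<close> by simp
    then show ?thesis unfolding R_A_def by auto
  qed
  then show ?thesis by blast
next
  case False
  let ?d = "DIM('a)"
  have k1: "1 \<le> k" and m1: "1 \<le> m" using False by auto
  define K where "K = nat k"
  have K1: "1 \<le> K" using k1 unfolding K_def by simp
  have kK: "k = int K" using k1 unfolding K_def by simp
  have Kn: "Suc ?d * K \<le> card A"
  proof -
    have "of_int k - 1 < (real (card A) - real ?d) / (real ?d + 1)"
      using assms(7) by (simp add: le_ceiling_iff)
    then have "(of_int k - 1) * (real ?d + 1) < real (card A) - real ?d"
      by (simp add: pos_less_divide_eq)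
    then have "real K * (real ?d + 1) < real (card A) + 1"
      using kK by (simp add: algebra_simps)
    then have "real (K * Suc ?d) < real (card A + 1)" by (simp add: algebra_simps)
    then have "K * Suc ?d < card A + 1" by (simp only: of_nat_less_iff)
    then show ?thesis by (simp add: mult.commute)
  qed
  have "\<forall>H\<in>A. \<exists>ab. fst ab \<noteq> 0 \<and> H = {x. fst ab \<bullet> x = snd ab}"
    using assms(2) unfolding is_hyperplane_def by fastforce
  from bchoice[OF this] obtain f where f: "\<forall>H\<in>A. fst (f H) \<noteq> 0 \<and> H = {x. fst (f H) \<bullet> x = snd (f H)}"
    by blast
  define na where "na H = fst (f H)" for H
  define nb where "nb H = snd (f H)" for H
  have hyp: "\<forall>H\<in>A. na H \<noteq> 0 \<and> H = {x. na H \<bullet> x = nb H}" using f unfolding na_def nb_def by blast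
  have gpa: "\<forall>S\<subseteq>A. S \<noteq> {} \<and> card S \<le> ?d \<longrightarrow> aff_dim (\<Inter>S) = int ?d - int (card S)"
    and gpb: "\<forall>S\<subseteq>A. card S = ?d + 1 \<longrightarrow> \<Inter>S = {}"
    using assms(3) unfolding general_position_def by auto
  have gp1: "\<forall>B\<subseteq>A. card B = ?d \<longrightarrow> (\<exists>p. \<Inter>B = {p})"
  proof (intro allI impI)
    fix B assume B: "B \<subseteq> A" "card B = ?d"
    then have "B \<noteq> {}" using DIM_positive[where 'a='a] by auto
    then have "aff_dim (\<Inter>B) = 0" using gpa B by simp
    then show "\<exists>p. \<Inter>B = {p}" by (simp add: aff_dim_eq_0)
  qed
  have gp2: "\<forall>B\<subseteq>A. card B = Suc ?d \<longrightarrow> \<Inter>B = {}" using gpb by simp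
  have mS: "m \<le> Suc ?d" using assms(4) by simp
  obtain q where q: "\<forall>i<m. K \<le> ray_count A (l i) q"
    using main_reduce[OF assms(1) hyp gp1 gp2 K1 Kn mS m1 assms(6)] by blast
  have "q \<in> (\<Inter>i<m. R_A A k (l i))"
    unfolding R_A_def using q kK by auto
  then show ?thesis by blast
qed

end
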